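(* Let $p$ be an odd prime and let $\zeta\in\mathbb{Z}_p$ be such that $-\zeta$ is not a square modulo $p$. Let $k\ge0$ and let $A,B,C,A',B',C'\in\mathbb{Z}_p$ with $p^k$ dividing each of $B,C,B',C'$. Suppose that, coefficientwise, $$(x^2+pA+\zeta)^2-p^2(Bx+C)^2\equiv (x^2+pA'+\zeta)^2-p^2(B'x+C')^2\pmod{p^{2k+3}}.$$ Then $A\equiv A'\pmod{p^{2k+2}}$. Consequently $(x^2+pA+\zeta)^2\equiv(x^2+pA'+\zeta)^2\pmod{p^{2k+3}}$. *)

theory Defs
  imports "HOL-Computational_Algebra.Polynomial" "Berlekamp_Zassenhaus.Finite_Field"
begin

text \<open>The p-adic integers Z_p, constructed as the inverse limit of the rings Z/p^n Z:
  an element is a coherent sequence of residues f n in {0..<p^n}. The prime p is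
  encoded as the cardinality of a type parameter (as in mod_ring).\<close>

definition coh :: "int \<Rightarrow> (nat \<Rightarrow> int) \<Rightarrow> bool" where
  "coh m f \<longleftrightarrow> (\<forall>n. f (Suc n) mod m ^ n = f n)"

typedef ('p::finite) padic = "{f. coh (int CARD('p)) f}"
  morphisms rep_padic Abs_padic
  by (rule exI[of _ "\<lambda>n. 0"]) (simp add: coh_def)

setup_lifting type_definition_padic

lemma mod_pow_Suc_mod: "(a::int) mod m ^ Suc n mod m ^ n = a mod m ^ n"
  by (rule mod_mod_cancel) (simp add: le_imp_power_dvd)

lemma coh_mod_self:
  assumes "coh m f" shows "f n mod m ^ n = f n"
proof -
  have e: "f (Suc n) mod m ^ n = f n" using assms by (simp add: coh_def)
  have "f n mod m ^ n = f (Suc n) mod m ^ n mod m ^ n" by (simp only: e)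
  also have "\<dots> = f (Suc n) mod m ^ n" by (rule mod_mod_trivial)
  finally show ?thesis by (simp only: e)
qed

lemma coh_binop:
  assumes "coh m f" "coh m g"
    and op: "\<And>a b c d M. a mod M = c mod M \<Longrightarrow> b mod M = d mod M \<Longrightarrow> h a b mod M = h c d mod M"
  shows "coh m (\<lambda>n. h (f n) (g n) mod m ^ n)"
  unfolding coh_def
proof
  fix n
  have "h (f (Suc n)) (g (Suc n)) mod m ^ n = h (f n) (g n) mod m ^ n"
  proof (rule op)
    show "f (Suc n) mod m ^ n = f n mod m ^ n"
      using assms(1) coh_mod_self[OF assms(1), of n] unfolding coh_def by simp
    show "g (Suc n) mod m ^ n = g n mod m ^ n"
      using assms(2) coh_mod_self[OF assms(2), of n] unfolding coh_def by simp
  qed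
  then show "h (f (Suc n)) (g (Suc n)) mod m ^ Suc n mod m ^ n = h (f n) (g n) mod m ^ n"
    by (simp only: mod_pow_Suc_mod)
qed

lemma coh_uminus:
  assumes "coh m f" shows "coh m (\<lambda>n. (- f n) mod m ^ n)"
proof -
  have "coh m (\<lambda>n. (\<lambda>a b. - a) (f n) (f n) mod m ^ n)"
    by (rule coh_binop[OF assms assms]) (rule mod_minus_cong)
  then show ?thesis by simp
qed

lemma coh_const: "coh m (\<lambda>n. c mod m ^ n)"
  unfolding coh_def by (simp only: mod_pow_Suc_mod simp_thms)

instantiation padic :: (finite) comm_ring
begin

lift_definition zero_padic :: "'a padic" is "\<lambda>n. 0" by (simp add: coh_def)

lift_definition plus_padic :: "'a padic \<Rightarrow> 'a padic \<Rightarrow> 'a padic"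
  is "\<lambda>f g n. (f n + g n) mod (int CARD('a)) ^ n"
  by (auto intro!: coh_binop[where h="(+)"] intro: mod_add_cong)

lift_definition minus_padic :: "'a padic \<Rightarrow> 'a padic \<Rightarrow> 'a padic"
  is "\<lambda>f g n. (f n - g n) mod (int CARD('a)) ^ n"
  by (auto intro!: coh_binop[where h="(-)"] intro: mod_diff_cong)

lift_definition uminus_padic :: "'a padic \<Rightarrow> 'a padic"
  is "\<lambda>f n. (- f n) mod (int CARD('a)) ^ n"
  by (rule coh_uminus)

lift_definition times_padic :: "'a padic \<Rightarrow> 'a padic \<Rightarrow> 'a padic"
  is "\<lambda>f g n. (f n * g n) mod (int CARD('a)) ^ n"
  by (auto intro!: coh_binop[where h="(*)"] intro: mod_mult_cong)

instance
proof
  fix a b c :: "'a padic"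
  show "a + b + c = a + (b + c)"
    by transfer (rule ext, simp add: mod_add_left_eq mod_add_right_eq add.assoc)
  show "a + b = b + a"
    by transfer (rule ext, simp add: add.commute)
  show "0 + a = a"
    by transfer (rule ext, simp add: coh_mod_self)
  show "- a + a = 0"
    by transfer (rule ext, simp add: mod_add_left_eq)
  show "a - b = a + - b"
    by transfer (rule ext, simp add: mod_add_right_eq)
  show "a * b * c = a * (b * c)"
    by transfer (rule ext, simp add: mod_mult_left_eq mod_mult_right_eq mult.assoc)
  show "a * b = b * a"
    by transfer (rule ext, simp add: mult.commute)
  show "(a + b) * c = a * c + b * c"
    by transfer (rule ext, simp add: mod_mult_left_eq mod_add_eq distrib_right)
qed

end

instantiation padic :: (nontriv) comm_ring_1
begin

lift_definition one_padic :: "'a padic" is "\<lambda>n. 1 mod (int CARD('a)) ^ n"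
  by (rule coh_const)

instance
proof
  fix a :: "'a padic"
  show "1 * a = a"
    by transfer (rule ext, simp add: mod_mult_left_eq coh_mod_self)
  have "(0::'a padic) \<noteq> 1"
  proof transfer
    have "int CARD('a) > 1" using nontriv[where ?'a='a] by simp
    then show "(\<lambda>n::nat. 0::int) \<noteq> (\<lambda>n. 1 mod int CARD('a) ^ n)"
      by (auto dest: fun_cong[where x=1])
  qed
  then show "(0::'a padic) \<noteq> 1" .
qed

end

abbreviation pp :: "'p::nontriv padic" where "pp \<equiv> of_nat CARD('p)"

end

theory Submission
  imports Defs "HOL-Computational_Algebra.Primes"
begin



lemma rep_coh: "coh (int CARD('p)) (rep_padic (x::'p::finite padic))"
  using rep_padic by auto

lemma rep_mod: "rep_padic (x::'p::finite padic) n mod int CARD('p) ^ n = rep_padic x n"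
  by (rule coh_mod_self[OF rep_coh])

lemma rep_le: "m \<le> n \<Longrightarrow> rep_padic (x::'p::finite padic) n mod int CARD('p) ^ m = rep_padic x m"
proof (induction n rule: dec_induct)
  case base then show ?case by (rule rep_mod)
next
  case (step n)
  have "rep_padic x (Suc n) mod int CARD('p) ^ m = rep_padic x (Suc n) mod int CARD('p) ^ n mod int CARD('p) ^ m"
    using step(1) by (simp add: mod_mod_cancel le_imp_power_dvd)
  also have "rep_padic x (Suc n) mod int CARD('p) ^ n = rep_padic x n"
    using rep_coh[of x] by (simp add: coh_def)
  finally show ?case using step by simp
qed

lemma rep_add: "rep_padic (x + y) n = (rep_padic x n + rep_padic y n) mod int CARD('p) ^ n"
  for x y :: "'p::finite padic" by (simp add: plus_padic.rep_eq)
lemma rep_diff: "rep_padic (x - y) n = (rep_padic x n - rep_padic y n) mod int CARD('p) ^ n"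
  for x y :: "'p::finite padic" by (simp add: minus_padic.rep_eq)
lemma rep_mult: "rep_padic (x * y) n = (rep_padic x n * rep_padic y n) mod int CARD('p) ^ n"
  for x y :: "'p::finite padic" by (simp add: times_padic.rep_eq)
lemma rep_one: "rep_padic (1::'p::nontriv padic) n = 1 mod int CARD('p) ^ n"
  by (simp add: one_padic.rep_eq)
lemma rep_zero: "rep_padic (0::'p::finite padic) n = 0"
  by (simp add: zero_padic.rep_eq)

definition R :: "nat \<Rightarrow> 'p::nontriv padic \<Rightarrow> int \<Rightarrow> bool" where
  "R n x X \<longleftrightarrow> rep_padic x n mod int CARD('p) ^ n = X mod int CARD('p) ^ n"

lemma R_leaf: "R n x (rep_padic x n)" by (simp add: R_def)
lemma R_add: "R n x X \<Longrightarrow> R n y Y \<Longrightarrow> R n (x + y) (X + Y)"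
  unfolding R_def rep_add by (metis mod_add_eq mod_mod_trivial)
lemma R_diff: "R n x X \<Longrightarrow> R n y Y \<Longrightarrow> R n (x - y) (X - Y)"
  unfolding R_def rep_diff by (metis mod_diff_eq mod_mod_trivial)
lemma R_mult: "R n x X \<Longrightarrow> R n y Y \<Longrightarrow> R n (x * y) (X * Y)"
  unfolding R_def rep_mult by (metis mod_mult_eq mod_mod_trivial)
lemma R_uminus: "R n x X \<Longrightarrow> R n (- x) (- X)"
  unfolding R_def uminus_padic.rep_eq by (metis mod_minus_eq mod_mod_trivial)
lemma R_one: "R n 1 1" unfolding R_def rep_one by simp
lemma R_zero: "R n 0 0" unfolding R_def rep_zero by simp
lemma R_pow: "R n x X \<Longrightarrow> R n (x ^ m) (X ^ m)"
  by (induction m) (auto intro: R_one R_mult)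
lemma R_of_nat: "R n (of_nat m) (int m)"
  by (induction m) (auto intro: R_one R_zero R_add)
lemma R_num: "R n (numeral m) (numeral m)"
  using R_of_nat[of n "numeral m"] by simp

lemma R_rep: "R n x X \<Longrightarrow> rep_padic x n = X mod int CARD('p) ^ n"
  for x :: "'p::nontriv padic" unfolding R_def rep_mod by simp

lemma mod_mult_div_int: "(0::int) < b \<Longrightarrow> 0 < c \<Longrightarrow> a mod (b * c) div b = a div b mod c"
proof -
  assume b: "0 < b" and c: "0 < c"
  have "a mod (b * c) = b * (a div b mod c) + a mod b"
    using c by (simp add: zmod_zmult2_eq)
  then have "a mod (b * c) div b = (a mod b + b * (a div b mod c)) div b" by (simp add: add.commute)
  also have "\<dots> = a div b mod c" using b by simp
  finally show ?thesis .
qed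

lemma pp_pow_dvd_imp: "pp ^ n dvd (x::'p::nontriv padic) \<Longrightarrow> rep_padic x n = 0"
proof -
  assume "pp ^ n dvd x"
  then obtain y where y: "x = pp ^ n * y" by blast
  have "R n x (int CARD('p) ^ n * rep_padic y n)"
    unfolding y by (intro R_mult R_pow R_of_nat R_leaf)
  then show ?thesis by (simp add: R_rep)
qed

lemma div_coh:
  fixes f :: "nat \<Rightarrow> int" and m :: int
  assumes c: "coh m f" and m: "m > 0"
  shows "coh m (\<lambda>j. (f (j + n) div m ^ n) mod m ^ j)"
  unfolding coh_def
proof
  fix j
  have e: "f (Suc j + n) mod m ^ (j + n) = f (j + n)"
    using c by (simp add: coh_def)
  have "f (j + n) div m ^ n mod m ^ j = (f (Suc j + n) mod (m ^ n * m ^ j)) div m ^ n mod m ^ j"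
    using e by (simp add: power_add mult.commute)
  also have "\<dots> = f (Suc j + n) div m ^ n mod m ^ j"
    using m by (simp add: mod_mult_div_int)
  finally have X: "f (j + n) div m ^ n mod m ^ j = f (Suc j + n) div m ^ n mod m ^ j" .
  show "f (Suc j + n) div m ^ n mod m ^ Suc j mod m ^ j = f (j + n) div m ^ n mod m ^ j"
    using X by (simp only: mod_pow_Suc_mod)
qed

lemma dvd_imp_pp_pow: 
  fixes x :: "'p::nontriv padic"
  assumes r: "rep_padic x n = 0" shows "pp ^ n dvd x"
proof -
  let ?m = "int CARD('p)"
  have m: "?m > 0" by simp
  let ?g = "\<lambda>j. (rep_padic x (j + n) div ?m ^ n) mod ?m ^ j"
  have cg: "coh ?m ?g" by (rule div_coh[OF rep_coh m])
  define y where "y = (Abs_padic ?g :: 'p padic)"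
  have ry: "rep_padic y = ?g" unfolding y_def using cg by (simp add: Abs_padic_inverse)
  have "x = pp ^ n * y"
  proof (rule rep_padic_inject[THEN iffD1], rule ext)
    fix j
    have "R j (pp ^ n * y) (?m ^ n * rep_padic y j)"
      by (intro R_mult R_pow R_of_nat R_leaf)
    then have "R j (pp ^ n * y) (?m ^ n * ?g j)" unfolding ry .
    then have "rep_padic (pp ^ n * y) j = (?m ^ n * ?g j) mod ?m ^ j" by (rule R_rep)
    also have "\<dots> = (?m ^ n * (rep_padic x (j + n) div ?m ^ n)) mod ?m ^ j"
      by (simp add: mod_mult_right_eq)
    also have "?m ^ n * (rep_padic x (j + n) div ?m ^ n) = rep_padic x (j + n)"
    proof -
      have "rep_padic x (j + n) mod ?m ^ n = 0" using rep_le[of n "j + n" x] r by simp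
      then show ?thesis using mult_div_mod_eq[of "?m ^ n" "rep_padic x (j + n)"] by simp
    qed
    also have "rep_padic x (j + n) mod ?m ^ j = rep_padic x j" by (rule rep_le) simp
    finally show "rep_padic x j = rep_padic (pp ^ n * y) j" by simp
  qed
  then show ?thesis by simp
qed

lemma pp_pow_dvd_iff: "pp ^ n dvd (x::'p::nontriv padic) \<longleftrightarrow> rep_padic x n = 0"
  using pp_pow_dvd_imp dvd_imp_pp_pow by blast

lemma pp_dvd_R: 
  fixes x :: "'p::nontriv padic"
  assumes "R N x X" "n \<le> N"
  shows "pp ^ n dvd x \<longleftrightarrow> int CARD('p) ^ n dvd X"
proof -
  let ?m = "int CARD('p)"
  have "rep_padic x n = rep_padic x N mod ?m ^ n" using rep_le[OF assms(2), where x=x] by simp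
  also have "\<dots> = X mod ?m ^ N mod ?m ^ n" using R_rep[OF assms(1)] by simp
  also have "\<dots> = X mod ?m ^ n" using assms(2) by (simp add: mod_mod_cancel le_imp_power_dvd)
  finally show ?thesis by (simp add: pp_pow_dvd_iff dvd_eq_mod_eq_0)
qed

definition emb :: "int \<Rightarrow> 'p::nontriv padic" where
  "emb y = Abs_padic (\<lambda>n. y mod int CARD('p) ^ n)"

lemma R_emb: "R n (emb y :: 'p::nontriv padic) y"
proof -
  have "rep_padic (emb y :: 'p padic) = (\<lambda>n. y mod int CARD('p) ^ n)"
    unfolding emb_def by (simp add: Abs_padic_inverse coh_const)
  then show ?thesis by (simp add: R_def)
qed



lemma inv_modp: "prime (p::int) \<Longrightarrow> \<not> p dvd b \<Longrightarrow> \<exists>v. p dvd b * v - 1"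
proof -
  assume p: "prime p" and nb: "\<not> p dvd b"
  have "coprime p b" by (rule prime_imp_coprime[OF p nb])
  then have g: "gcd p b = 1" by (simp add: coprime_iff_gcd_eq_1)
  obtain u v where "u * p + v * b = gcd p b" using bezout_int by blast
  then have "b * v - 1 = p * (- u)" using g by (simp add: algebra_simps)
  then show ?thesis by (metis dvd_triv_left)
qed

lemma modpA:
  fixes p z \<beta> \<gamma> \<beta>' \<gamma>' :: int
  assumes p: "prime p" and nsq: "\<forall>y. \<not> p dvd (y^2 + z)"
    and e1: "p dvd \<gamma>^2 - \<gamma>'^2 - z*\<beta>^2 + z*\<beta>'^2" and e2: "p dvd \<beta>*\<gamma> - \<beta>'*\<gamma>'"
  shows "p dvd \<beta>^2 - \<beta>'^2 \<or> p dvd \<beta>"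
proof (rule ccontr)
  assume n: "\<not> (p dvd \<beta>^2 - \<beta>'^2 \<or> p dvd \<beta>)"
  have id: "\<beta>^2 * (\<gamma>^2 - \<gamma>'^2 - z*\<beta>^2 + z*\<beta>'^2) - (\<beta>*\<gamma> - \<beta>'*\<gamma>') * (\<beta>*\<gamma> + \<beta>'*\<gamma>')
     = (\<beta>'^2 - \<beta>^2) * (\<gamma>'^2 + z*\<beta>^2)"
    by (simp add: algebra_simps power2_eq_square)
  have "p dvd (\<beta>'^2 - \<beta>^2) * (\<gamma>'^2 + z*\<beta>^2)"
    unfolding id[symmetric] by (rule dvd_diff[OF dvd_mult[OF e1] dvd_mult2[OF e2]])
  moreover have "\<not> p dvd \<beta>'^2 - \<beta>^2" using n by (metis dvd_minus_iff minus_diff_eq)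
  ultimately have d: "p dvd \<gamma>'^2 + z*\<beta>^2" using p prime_dvd_mult_iff by blast
  have "\<not> p dvd \<beta>" using n by blast
  then obtain v where v: "p dvd \<beta> * v - 1" using inv_modp p by blast
  have id2: "(\<gamma>' * v)^2 + z = v^2 * (\<gamma>'^2 + z*\<beta>^2) - z * (\<beta> * v - 1) * (\<beta> * v + 1)"
    by (simp add: algebra_simps power2_eq_square)
  have "p dvd (\<gamma>' * v)^2 + z" unfolding id2 by (rule dvd_diff[OF dvd_mult[OF d] dvd_mult2[OF dvd_mult[OF v]]])
  then show False using nsq by blast
qed

lemma modp:
  fixes p z \<beta> \<gamma> \<beta>' \<gamma>' :: int
  assumes p: "prime p" and nsq: "\<forall>y. \<not> p dvd (y^2 + z)"
    and e1: "p dvd \<gamma>^2 - \<gamma>'^2 - z*\<beta>^2 + z*\<beta>'^2" and e2: "p dvd \<beta>*\<gamma> - \<beta>'*\<gamma>'"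
  shows "p dvd \<beta>^2 - \<beta>'^2"
proof -
  have A: "p dvd \<beta>^2 - \<beta>'^2 \<or> p dvd \<beta>" by (rule modpA[OF p nsq e1 e2])
  have e1': "p dvd \<gamma>'^2 - \<gamma>^2 - z*\<beta>'^2 + z*\<beta>^2"
    using e1 by (metis dvd_minus_iff minus_diff_eq diff_add_eq diff_diff_eq2 add.commute)
  have e2': "p dvd \<beta>'*\<gamma>' - \<beta>*\<gamma>" using e2 by (metis dvd_minus_iff minus_diff_eq)
  have B: "p dvd \<beta>'^2 - \<beta>^2 \<or> p dvd \<beta>'" by (rule modpA[OF p nsq e1' e2'])
  show ?thesis
  proof (cases "p dvd \<beta> \<and> p dvd \<beta>'")
    case True
    then show ?thesis by (simp add: power2_eq_square)
  next
    case False
    then show ?thesis using A B by (metis dvd_minus_iff minus_diff_eq)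
  qed
qed

lemma pow_cancel: "(p::int) \<noteq> 0 \<Longrightarrow> p ^ Suc n dvd p * X \<Longrightarrow> p ^ n dvd X"
  by simp

lemma dvd_sub_mult: "(q::int) dvd X - q*Y \<Longrightarrow> q dvd X"
  by (metis diff_add_cancel dvd_add dvd_triv_left)

lemma mult_cancel': "(q::int) \<noteq> 0 \<Longrightarrow> q * p dvd q * X \<Longrightarrow> p dvd X"
  by simp

lemma core:
  fixes p z a a' b c b' c' :: int and k :: nat
  assumes p: "prime p" and odd: "odd p" and nsq: "\<forall>y. \<not> p dvd (y^2 + z)"
    and kb: "p^k dvd b" and kc: "p^k dvd c" and kb': "p^k dvd b'" and kc': "p^k dvd c'"
    and h0: "p^(2*k+3) dvd ((p*a+z)^2 - p^2*c^2) - ((p*a'+z)^2 - p^2*c'^2)"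
    and h1: "p^(2*k+3) dvd (- (p^2*(2*b*c))) - (- (p^2*(2*b'*c')))"
    and h2: "p^(2*k+3) dvd (2*(p*a+z) - p^2*b^2) - (2*(p*a'+z) - p^2*b'^2)"
  shows "p^(2*k+2) dvd a - a'"
proof -
  obtain \<beta> where \<beta>: "b = p^k * \<beta>" using kb by blast
  obtain \<gamma> where \<gamma>: "c = p^k * \<gamma>" using kc by blast
  obtain \<beta>' where \<beta>': "b' = p^k * \<beta>'" using kb' by blast
  obtain \<gamma>' where \<gamma>': "c' = p^k * \<gamma>'" using kc' by blast
  define d where "d = a - a'"
  have p0: "p \<noteq> 0" using p by auto
  have n2: "\<not> p dvd 2"
  proof
    assume "p dvd 2"
    then have "p \<le> 2" by (simp add: zdvd_imp_le)
    moreover have "p \<ge> 2" using p by (simp add: prime_ge_2_int)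
    ultimately have "p = 2" by simp
    then show False using odd by simp
  qed
  have cop2: "coprime 2 p" using prime_imp_coprime[OF p n2] by (simp add: coprime_commute)
  have copn: "coprime 2 (p^n)" for n using cop2 by simp
  let ?q = "p^(2*k+1)"
  define P where "P = p^k"
  have qP: "?q = p * P * P" unfolding P_def by (simp add: power_add mult_2 power_mult_distrib)
  have id2: "(2*(p*a+z) - p^2*b^2) - (2*(p*a'+z) - p^2*b'^2) = p * (2*d - ?q * (\<beta>^2 - \<beta>'^2))"
    unfolding \<beta> \<beta>' d_def qP P_def[symmetric] by (simp add: algebra_simps power2_eq_square)
  have e3: "2*k+3 = Suc (2*k+2)" by simp
  have "p^(2*k+2) dvd 2*d - ?q * (\<beta>^2 - \<beta>'^2)"
    using h2 unfolding id2 e3 by (rule pow_cancel[OF p0])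
  then have "?q dvd 2*d - ?q * (\<beta>^2 - \<beta>'^2)" by (rule dvd_trans[rotated]) (simp add: le_imp_power_dvd)
  then have "?q dvd 2*d" by (rule dvd_sub_mult)
  then have "?q dvd d" using copn by (metis coprime_commute coprime_dvd_mult_right_iff)
  then obtain \<delta> where \<delta>: "d = ?q * \<delta>" by blast
  have q0: "p*P*P \<noteq> 0" using p0 unfolding P_def by simp
  have pk2: "p^(2*k) = P*P" unfolding P_def by (simp add: mult_2 power_add)
  have p2: "p^(2*k+2) = (p*P*P)*p" unfolding power_add pk2 by (simp add: power2_eq_square algebra_simps)
  have p3: "p^(2*k+3) = (p*P*P*p)*p" unfolding power_add pk2 by (simp add: power3_eq_cube algebra_simps)
  have "(p*P*P)*p dvd (p*P*P) * (2*\<delta> - (\<beta>^2 - \<beta>'^2))"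
    using \<open>p^(2*k+2) dvd 2*d - ?q * (\<beta>^2 - \<beta>'^2)\<close> unfolding p2 \<delta> qP
    by (simp add: algebra_simps)
  then have f2: "p dvd 2*\<delta> - (\<beta>^2 - \<beta>'^2)" by (rule mult_cancel'[OF q0])
  have q1: "p*P*P*p \<noteq> 0" using q0 p0 by simp
  have "(p*P*P*p)*p dvd (p*P*P*p) * (-2 * (\<beta>*\<gamma> - \<beta>'*\<gamma>'))"
    using h1 unfolding p3 \<beta> \<gamma> \<beta>' \<gamma>' P_def[symmetric]
    by (simp add: algebra_simps power2_eq_square)
  then have "p dvd -2 * (\<beta>*\<gamma> - \<beta>'*\<gamma>')" by (rule mult_cancel'[OF q1])
  then have f1: "p dvd \<beta>*\<gamma> - \<beta>'*\<gamma>'" using n2 p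
    by (metis dvd_minus_iff mult_minus_left prime_dvd_mult_iff)
  have ad: "a - a' = p*P*P*\<delta>" using \<delta> unfolding qP d_def by simp
  have "((p*a+z)^2 - p^2*c^2) - ((p*a'+z)^2 - p^2*c'^2)
      = p*(a - a')*(p*(a+a') + 2*z) - p*p*P*P*(\<gamma>^2 - \<gamma>'^2)"
    unfolding \<gamma> \<gamma>' P_def[symmetric] by (simp add: algebra_simps power2_eq_square)
  also have "\<dots> = (p*P*P*p) * (\<delta>*(p*(a+a') + 2*z) - (\<gamma>^2 - \<gamma>'^2))"
    unfolding ad by (simp add: algebra_simps)
  finally have "(p*P*P*p)*p dvd (p*P*P*p) * (\<delta>*(p*(a+a') + 2*z) - (\<gamma>^2 - \<gamma>'^2))"
    using h0 unfolding p3 by simp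
  then have f0: "p dvd \<delta>*(p*(a+a') + 2*z) - (\<gamma>^2 - \<gamma>'^2)" by (rule mult_cancel'[OF q1])
  have idE: "\<gamma>^2 - \<gamma>'^2 - z*\<beta>^2 + z*\<beta>'^2
     = z * (2*\<delta> - (\<beta>^2 - \<beta>'^2)) - (\<delta>*(p*(a+a') + 2*z) - (\<gamma>^2 - \<gamma>'^2)) + p * (\<delta>*(a+a'))"
    by (simp add: algebra_simps)
  have e1: "p dvd \<gamma>^2 - \<gamma>'^2 - z*\<beta>^2 + z*\<beta>'^2"
    unfolding idE by (rule dvd_add[OF dvd_diff[OF dvd_mult[OF f2] f0] dvd_triv_left])
  have "p dvd \<beta>^2 - \<beta>'^2" by (rule modp[OF p nsq e1 f1])
  then have "p dvd 2*\<delta>" using f2 by (metis diff_add_cancel dvd_add)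
  then have "p dvd \<delta>" using n2 p by (metis prime_dvd_mult_iff)
  then obtain m where m: "\<delta> = p * m" by blast
  have "d = p^(2*k+2) * m" using \<delta> unfolding qP p2 m by (simp add: algebra_simps)
  then show ?thesis unfolding d_def by simp
qed


lemma sq1: "[:u, 0, 1:] ^ 2 = [:u*u, 0, 2*u, 0, 1::'a::comm_ring_1:]"
  by (simp add: power2_eq_square algebra_simps mult_2)

lemma sq2: "[:c, b:] ^ 2 = [:c*c, 2*c*b, b*b::'a::comm_ring_1:]"
  by (simp add: power2_eq_square algebra_simps mult_2)

theorem claim2:
  fixes \<zeta> A B C A' B' C' :: "'p::prime_card padic" and k :: nat
  assumes "odd CARD('p)"
    and "\<not> (\<exists>y. pp dvd (y ^ 2 - (- \<zeta>)))"
    and "pp ^ k dvd B" and "pp ^ k dvd C" and "pp ^ k dvd B'" and "pp ^ k dvd C'"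
    and "\<forall>i. pp ^ (2 * k + 3) dvd
           (coeff ([:pp * A + \<zeta>, 0, 1:] ^ 2 - smult (pp ^ 2) ([:C, B:] ^ 2)) i
          - coeff ([:pp * A' + \<zeta>, 0, 1:] ^ 2 - smult (pp ^ 2) ([:C', B':] ^ 2)) i)"
  shows "pp ^ (2 * k + 2) dvd (A - A')
    \<and> (\<forall>i. pp ^ (2 * k + 3) dvd
           (coeff ([:pp * A + \<zeta>, 0, 1:] ^ 2) i - coeff ([:pp * A' + \<zeta>, 0, 1:] ^ 2) i))"
proof -
  note hyp = assms(7)
  define N where "N = 2 * k + 3"
  let ?m = "int CARD('p)"
  define a where "a = rep_padic A N"
  define a' where "a' = rep_padic A' N"
  define b where "b = rep_padic B N"
  define b' where "b' = rep_padic B' N"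
  define c where "c = rep_padic C N"
  define c' where "c' = rep_padic C' N"
  define z where "z = rep_padic \<zeta> N"
  have RA: "R N A a" "R N A' a'" "R N B b" "R N B' b'" "R N C c" "R N C' c'" "R N \<zeta> z"
    unfolding a_def a'_def b_def b'_def c_def c'_def z_def by (rule R_leaf)+
  have p: "prime ?m" by (rule prime_card_int)
  have odd: "odd ?m" using assms(1) by simp
  have nsq: "\<forall>y. \<not> ?m dvd (y^2 + z)"
  proof (intro allI notI)
    fix y assume d: "?m dvd y^2 + z"
    have "R N ((emb y :: 'p padic) ^ 2 - (- \<zeta>)) (y^2 - (- z))"
      by (intro R_diff R_pow R_emb RA R_uminus)
    then have "pp ^ 1 dvd (emb y :: 'p padic) ^ 2 - (- \<zeta>) \<longleftrightarrow> ?m ^ 1 dvd y^2 - (- z)"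
      by (rule pp_dvd_R) (simp add: N_def)
    then show False using assms(2) d by auto
  qed
  have kN: "k \<le> N" unfolding N_def by simp
  have kb: "?m^k dvd b" using pp_dvd_R[OF RA(3) kN] assms(3) by simp
  have kb': "?m^k dvd b'" using pp_dvd_R[OF RA(4) kN] assms(5) by simp
  have kc: "?m^k dvd c" using pp_dvd_R[OF RA(5) kN] assms(4) by simp
  have kc': "?m^k dvd c'" using pp_dvd_R[OF RA(6) kN] assms(6) by simp
  have NN: "2*k+3 \<le> N" unfolding N_def by simp
  have c0: "coeff ([:pp * A + \<zeta>, 0, 1:] ^ 2 - smult (pp ^ 2) ([:C, B:] ^ 2)) 0
          - coeff ([:pp * A' + \<zeta>, 0, 1:] ^ 2 - smult (pp ^ 2) ([:C', B':] ^ 2)) 0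
      = ((pp*A+\<zeta>)^2 - pp^2*C^2) - ((pp*A'+\<zeta>)^2 - pp^2*C'^2)"
    unfolding sq1 sq2 by (simp add: power2_eq_square)
  have c1: "coeff ([:pp * A + \<zeta>, 0, 1:] ^ 2 - smult (pp ^ 2) ([:C, B:] ^ 2)) 1
          - coeff ([:pp * A' + \<zeta>, 0, 1:] ^ 2 - smult (pp ^ 2) ([:C', B':] ^ 2)) 1
      = (- (pp^2*(2*B*C))) - (- (pp^2*(2*B'*C')))"
    unfolding sq2 sq1 by (simp add: algebra_simps)
  have c2: "coeff ([:pp * A + \<zeta>, 0, 1:] ^ 2 - smult (pp ^ 2) ([:C, B:] ^ 2)) 2
          - coeff ([:pp * A' + \<zeta>, 0, 1:] ^ 2 - smult (pp ^ 2) ([:C', B':] ^ 2)) 2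
      = (2*(pp*A+\<zeta>) - pp^2*B^2) - (2*(pp*A'+\<zeta>) - pp^2*B'^2)"
    unfolding sq2 sq1 by (simp add: numeral_2_eq_2 power2_eq_square)
  have "R N (((pp*A+\<zeta>)^2 - pp^2*C^2) - ((pp*A'+\<zeta>)^2 - pp^2*C'^2))
     (((?m*a+z)^2 - ?m^2*c^2) - ((?m*a'+z)^2 - ?m^2*c'^2))"
    by (intro R_diff R_add R_mult R_pow R_of_nat RA)
  then have h0: "?m^(2*k+3) dvd ((?m*a+z)^2 - ?m^2*c^2) - ((?m*a'+z)^2 - ?m^2*c'^2)"
    using pp_dvd_R NN hyp[rule_format, of 0] unfolding c0 by blast
  have "R N ((- (pp^2*(2*B*C))) - (- (pp^2*(2*B'*C'))))
     ((- (?m^2*(2*b*c))) - (- (?m^2*(2*b'*c'))))"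
    by (intro R_diff R_uminus R_mult R_pow R_of_nat R_num RA)
  then have h1: "?m^(2*k+3) dvd (- (?m^2*(2*b*c))) - (- (?m^2*(2*b'*c')))"
    using pp_dvd_R NN hyp[rule_format, of 1] unfolding c1 by blast
  have "R N ((2*(pp*A+\<zeta>) - pp^2*B^2) - (2*(pp*A'+\<zeta>) - pp^2*B'^2))
     ((2*(?m*a+z) - ?m^2*b^2) - (2*(?m*a'+z) - ?m^2*b'^2))"
    by (intro R_diff R_add R_mult R_pow R_of_nat R_num RA)
  then have h2: "?m^(2*k+3) dvd (2*(?m*a+z) - ?m^2*b^2) - (2*(?m*a'+z) - ?m^2*b'^2)"
    using pp_dvd_R NN hyp[rule_format, of 2] unfolding c2 by blast
  have "?m^(2*k+2) dvd a - a'" by (rule core[OF p odd nsq kb kc kb' kc' h0 h1 h2])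
  moreover have "R N (A - A') (a - a')" by (intro R_diff RA)
  ultimately have D: "pp^(2*k+2) dvd A - A'" using pp_dvd_R[of N "A - A'" "a - a'" "2*k+2"] N_def by simp
  then obtain E where E: "A - A' = pp^(2*k+2) * E" by blast
  have "pp ^ (2 * k + 3) dvd
           (coeff ([:pp * A + \<zeta>, 0, 1:] ^ 2) i - coeff ([:pp * A' + \<zeta>, 0, 1:] ^ 2) i)" for i
  proof -
    have Aeq: "A = A' + pp^(2*k+2) * E" using E by (simp add: algebra_simps)
    define Q where "Q = (pp::'p padic)^(2*k+2)"
    have e3: "2*k+3 = Suc (2*k+2)" by simp
    have Q3: "pp^(2*k+3) = pp * Q" unfolding Q_def e3 by (rule power_Suc)
    have AQ: "A = A' + Q * E" using Aeq unfolding Q_def .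
    consider "i = 0" | "i = Suc 0" | "i = Suc (Suc 0)" | "i = Suc (Suc (Suc 0))"
      | "i = Suc (Suc (Suc (Suc 0)))" | "i = Suc (Suc (Suc (Suc (Suc (i - 5)))))" by linarith
    then show ?thesis
    proof cases
      case 1
      have "coeff ([:pp * A + \<zeta>, 0, 1:] ^ 2) i - coeff ([:pp * A' + \<zeta>, 0, 1:] ^ 2) i
          = (pp * Q) * (E * (2*(pp*A'+\<zeta>) + (pp * Q)*E))"
        unfolding sq1 1 AQ by (simp add: algebra_simps power2_eq_square)
      then show ?thesis unfolding Q3 by simp
    next
      case 2 then show ?thesis unfolding sq1 by simp
    next
      case 3
      have "coeff ([:pp * A + \<zeta>, 0, 1:] ^ 2) i - coeff ([:pp * A' + \<zeta>, 0, 1:] ^ 2) i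
          = (pp * Q) * (2 * E)"
        unfolding sq1 3 AQ by (simp add: algebra_simps)
      then show ?thesis unfolding Q3 by simp
    next
      case 4 then show ?thesis unfolding sq1 by simp
    next
      case 5 then show ?thesis unfolding sq1 by simp
    next
      case 6
      then obtain j where j: "i = Suc (Suc (Suc (Suc (Suc j))))" by blast
      show ?thesis unfolding sq1 j by simp
    qed
  qed
  then show ?thesis using D by blast
qed

end
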